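(* Under the setting described in the context, let $m^*=(m_1^*,\dots,m_N^* )\in\prod_{i\in\mathcal N}\mathcal M_i$ be a Nash equilibrium of the game induced by the game form, and let $\hat a^*_i:=\hat a_i(m^* )$ and $\hat t^*_i:=\hat t_i(m^* )$ for $i\in\mathcal N$. Then: (a) (individual rationality) for every $i\in\mathcal N$, $u_i^A\big((\hat a^*_j)_{j\in\mathcal R_i},\hat t^*_i\big)\ \ge\ u_i^A(\mathbf 0,0)$; (b) $\big((\hat a^*_i)_{i\in\mathcal N},(\hat t^*_i)_{i\in\mathcal N}\big)$ is an optimal solution of the centralized problem $(P_C)$.
   Context: Let $N\ge 1$ and $\mathcal N=\{1,\dots,N\}$. For each $i\in\mathcal N$ a set $\mathcal R_i\subseteq\mathcal N$ with $i\in\mathcal R_i$ is given (the users affecting $i$); for $j\in\mathcal N$ put $\mathcal C_j=\{k\in\mathcal N: j\in\mathcal R_k\}$ (the users affected by $j$), and assume $|\mathcal C_j|\ge 3$ for all $j$. Each $\mathcal A_i\subset\mathbb R$ is a nonempty convex compact set with $0\in\mathcal A_i$. For each $i$, $u_i:\mathbb R^{\mathcal R_i}\to\mathbb R\cup\{-\infty\}$ is concave, is real-valued at every $a_{\mathcal R_i}=(a_k)_{k\in\mathcal R_i}$ with $a_i\in\mathcal A_i$, and equals $-\infty$ whenever $a_i\notin\mathcal A_i$. The aggregate utility of $i$ is $u_i^A(a_{\mathcal R_i},t_i)=-t_i+u_i(a_{\mathcal R_i})$ if $a_i\in\mathcal A_i$ and $-\infty$ otherwise ($t_i\in\mathbb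 R$ is a tax). Centralized problem $(P_C)$: maximize $\sum_{i\in\mathcal N}u_i^A(a_{\mathcal R_i},t_i)$ over $(a,t)\in\mathbb R^N\times\mathbb R^N$ subject to $\sum_i t_i=0$; equivalently maximize $\sum_i u_i(a_{\mathcal R_i})$ over the feasible set $\mathcal D=\{(a,t): a_i\in\mathcal A_i\ \forall i,\ \sum_i t_i=0\}$. Game form: user $i$'s message is $m_i=({}^ia_{\mathcal R_i},{}^i\pi_{\mathcal R_i})$ with ${}^ia_{\mathcal R_i}=({}^ia_k)_{k\in\mathcal R_i}\in\mathbb R^{\mathcal R_i}$ and ${}^i\pi_{\mathcal R_i}=({}^i\pi_k)_{k\in\mathcal R_i}\in\mathbb R_+^{\mathcal R_i}$; $\mathcal M_i=\mathbb R^{\mathcal R_i}\times\mathbb R_+^{\mathcal R_i}$. The action outcome is $\hat a_i(m)=\frac1{|\mathcal C_i|}\sum_{k\in\mathcal C_i}{}^ka_i$. For each $j$ fix a bijection $\mathcal I_{\cdot j}:\mathcal C_j\to\{1,\dots,|\mathcal C_j|\}$, write $\mathcal C_{j(k)}$ for the user of $\mathcal C_j$ with index $k$, indices taken cyclically modulo $|\mathcal C_j|$ (so $\mathcal C_{j(|\mathcal C_j|+1)}=\mathcal C_{j(1)}$ etc.). For $i\in\mathcal N$, $j\in\mathcal R_i$ (equivalently $i\in\mathcal C_j$) write $i^+=\mathcal C_{j(\mathcal I_{ij}+1)}$, $i^{++}=\mathcal C_{j(\mathcal I_{ij}+2)}$ (depending on $j$), and define $l_{ij}(m)={}^{i^+}\pi_j-{}^{i^{++}}\pi_j$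 and the tax $\hat t_i(m)=\sum_{j\in\mathcal R_i}\Big[l_{ij}(m)\,\hat a_j(m)+{}^i\pi_j\big({}^ia_j-{}^{i^+}a_j\big)^2-{}^{i^+}\pi_j\big({}^{i^+}a_j-{}^{i^{++}}a_j\big)^2\Big]$. A Nash equilibrium is $m^*\in\prod_i\mathcal M_i$ such that for all $i$ and all $m_i\in\mathcal M_i$, $u_i^A\big((\hat a_j(m^* ))_{j\in\mathcal R_i},\hat t_i(m^* )\big)\ge u_i^A\big((\hat a_j(m_i,m^*_{-i}))_{j\in\mathcal R_i},\hat t_i(m_i,m^*_{-i})\big)$, where $(m_i,m^*_{-i})$ replaces the $i$-th message of $m^*$ by $m_i$. *)

theory Defs
  imports "HOL-Analysis.Analysis" "HOL-Library.FuncSet" "HOL-Library.Extended_Real"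
begin

(* Users are 1..N.  R i is the set of users affecting i. *)

definition affected :: "nat \<Rightarrow> (nat \<Rightarrow> nat set) \<Rightarrow> nat \<Rightarrow> nat set" where
  "affected N R j = {k \<in> {1..N}. j \<in> R k}"

(* A message of user i: (^i a_{R_i}, ^i pi_{R_i}) in R^{R_i} x R_+^{R_i} *)
type_synonym msg = "(nat \<Rightarrow> real) \<times> (nat \<Rightarrow> real)"

definition msg_space :: "(nat \<Rightarrow> nat set) \<Rightarrow> nat \<Rightarrow> msg set" where
  "msg_space R i = (R i \<rightarrow>\<^sub>E (UNIV :: real set)) \<times> (R i \<rightarrow>\<^sub>E {0..})"

definition cyc_user :: "nat \<Rightarrow> (nat \<Rightarrow> nat set) \<Rightarrow> (nat \<Rightarrow> nat \<Rightarrow> nat) \<Rightarrow> nat \<Rightarrow> nat \<Rightarrow> nat" where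
  "cyc_user N R Ix j k =
     the_inv_into (affected N R j) (\<lambda>i. Ix i j) ((k - 1) mod card (affected N R j) + 1)"

definition plus1 :: "nat \<Rightarrow> (nat \<Rightarrow> nat set) \<Rightarrow> (nat \<Rightarrow> nat \<Rightarrow> nat) \<Rightarrow> nat \<Rightarrow> nat \<Rightarrow> nat" where
  "plus1 N R Ix i j = cyc_user N R Ix j (Ix i j + 1)"

definition plus2 :: "nat \<Rightarrow> (nat \<Rightarrow> nat set) \<Rightarrow> (nat \<Rightarrow> nat \<Rightarrow> nat) \<Rightarrow> nat \<Rightarrow> nat \<Rightarrow> nat" where
  "plus2 N R Ix i j = cyc_user N R Ix j (Ix i j + 2)"

definition a_hat :: "nat \<Rightarrow> (nat \<Rightarrow> nat set) \<Rightarrow> (nat \<Rightarrow> msg) \<Rightarrow> nat \<Rightarrow> real" where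
  "a_hat N R m i = (1 / real (card (affected N R i))) * (\<Sum>k\<in>affected N R i. fst (m k) i)"

definition l_price :: "nat \<Rightarrow> (nat \<Rightarrow> nat set) \<Rightarrow> (nat \<Rightarrow> nat \<Rightarrow> nat) \<Rightarrow> (nat \<Rightarrow> msg) \<Rightarrow> nat \<Rightarrow> nat \<Rightarrow> real" where
  "l_price N R Ix m i j = snd (m (plus1 N R Ix i j)) j - snd (m (plus2 N R Ix i j)) j"

definition t_hat :: "nat \<Rightarrow> (nat \<Rightarrow> nat set) \<Rightarrow> (nat \<Rightarrow> nat \<Rightarrow> nat) \<Rightarrow> (nat \<Rightarrow> msg) \<Rightarrow> nat \<Rightarrow> real" where
  "t_hat N R Ix m i =
     (\<Sum>j\<in>R i.
        l_price N R Ix m i j * a_hat N R m j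
        + snd (m i) j * (fst (m i) j - fst (m (plus1 N R Ix i j)) j)\<^sup>2
        - snd (m (plus1 N R Ix i j)) j
            * (fst (m (plus1 N R Ix i j)) j - fst (m (plus2 N R Ix i j)) j)\<^sup>2)"

(* Utility u_i: given as a real function on a_{R_i} (a restricted to R_i), meaningful
   when a_i \<in> A_i; the value -\<infinity> for a_i \<notin> A_i is made explicit below. *)
definition uA :: "(nat \<Rightarrow> nat set) \<Rightarrow> (nat \<Rightarrow> real set) \<Rightarrow> (nat \<Rightarrow> (nat \<Rightarrow> real) \<Rightarrow> real)
                   \<Rightarrow> nat \<Rightarrow> (nat \<Rightarrow> real) \<Rightarrow> real \<Rightarrow> ereal" where
  "uA R A u i a t = (if a i \<in> A i then ereal (- t + u i (restrict a (R i))) else -\<infinity>)"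

(* concavity of the extended function u_i on R^{R_i} (real on {a_i \<in> A_i}, -\<infinity> elsewhere) *)
definition concave_util :: "(nat \<Rightarrow> nat set) \<Rightarrow> (nat \<Rightarrow> real set) \<Rightarrow> (nat \<Rightarrow> (nat \<Rightarrow> real) \<Rightarrow> real) \<Rightarrow> nat \<Rightarrow> bool" where
  "concave_util R A u i \<longleftrightarrow>
     (\<forall>x y (\<theta>::real). x i \<in> A i \<longrightarrow> y i \<in> A i \<longrightarrow> 0 \<le> \<theta> \<longrightarrow> \<theta> \<le> 1 \<longrightarrow>
        \<theta> * u i (restrict x (R i)) + (1 - \<theta>) * u i (restrict y (R i))
          \<le> u i (restrict (\<lambda>k. \<theta> * x k + (1 - \<theta>) * y k) (R i)))"

definition nash_eq :: "nat \<Rightarrow> (nat \<Rightarrow> nat set) \<Rightarrow> (nat \<Rightarrow> nat \<Rightarrow> nat) \<Rightarrow> (nat \<Rightarrow> real set)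
      \<Rightarrow> (nat \<Rightarrow> (nat \<Rightarrow> real) \<Rightarrow> real) \<Rightarrow> (nat \<Rightarrow> msg) \<Rightarrow> bool" where
  "nash_eq N R Ix A u m \<longleftrightarrow>
     m \<in> (\<Pi>\<^sub>E i\<in>{1..N}. msg_space R i) \<and>
     (\<forall>i\<in>{1..N}. \<forall>mi\<in>msg_space R i.
        uA R A u i (a_hat N R (m(i := mi))) (t_hat N R Ix (m(i := mi)) i)
          \<le> uA R A u i (a_hat N R m) (t_hat N R Ix m i))"

definition optimal_PC :: "nat \<Rightarrow> (nat \<Rightarrow> nat set) \<Rightarrow> (nat \<Rightarrow> real set)
      \<Rightarrow> (nat \<Rightarrow> (nat \<Rightarrow> real) \<Rightarrow> real) \<Rightarrow> (nat \<Rightarrow> real) \<Rightarrow> (nat \<Rightarrow> real) \<Rightarrow> bool" where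
  "optimal_PC N R A u a t \<longleftrightarrow>
     (\<forall>i\<in>{1..N}. a i \<in> A i) \<and> (\<Sum>i\<in>{1..N}. t i) = 0 \<and>
     (\<forall>a' t'. (\<Sum>i\<in>{1..N}. t' i) = 0 \<longrightarrow>
        (\<Sum>i\<in>{1..N}. uA R A u i a' (t' i)) \<le> (\<Sum>i\<in>{1..N}. uA R A u i a (t i)))"

end

theory Submission
  imports Defs
begin

locale setting =
  fixes N :: nat
    and R :: "nat \<Rightarrow> nat set"
    and A :: "nat \<Rightarrow> real set"
    and u :: "nat \<Rightarrow> (nat \<Rightarrow> real) \<Rightarrow> real"
    and Ix :: "nat \<Rightarrow> nat \<Rightarrow> nat"
    and m :: "nat \<Rightarrow> msg"
  assumes R_sub: "\<forall>i\<in>{1..N}. R i \<subseteq> {1..N}"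
    and R_self: "\<forall>i\<in>{1..N}. i \<in> R i"
    and C_card: "\<forall>j\<in>{1..N}. card (affected N R j) \<ge> 3"
    and A_zero: "\<forall>i\<in>{1..N}. (0::real) \<in> A i"
    and Ix_bij: "\<forall>j\<in>{1..N}. bij_betw (\<lambda>i. Ix i j) (affected N R j) {1..card (affected N R j)}"
    and NE: "nash_eq N R Ix A u m"
begin

abbreviation "C j \<equiv> affected N R j"
abbreviation "c j \<equiv> card (affected N R j)"
abbreviation "p1 i j \<equiv> plus1 N R Ix i j"

definition P :: "(nat \<Rightarrow> msg) \<Rightarrow> nat \<Rightarrow> nat \<Rightarrow> real" where
  "P m' i j = snd (m' i) j * (fst (m' i) j - fst (m' (p1 i j)) j)\<^sup>2"

lemma fin_C: "finite (C j)"
  unfolding affected_def by simp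

lemma C_mem: "i \<in> C j \<longleftrightarrow> i \<in> {1..N} \<and> j \<in> R i"
  unfolding affected_def by simp

lemma Rj: assumes "i \<in> {1..N}" "j \<in> R i" shows "j \<in> {1..N}"
proof -
  have "R i \<subseteq> {1..N}" using R_sub assms(1) by (rule bspec)
  then show ?thesis using assms(2) by (rule subsetD)
qed

lemma c_ge: "j \<in> {1..N} \<Longrightarrow> c j \<ge> 3"
  using C_card by auto

lemma Ix_range: "j \<in> {1..N} \<Longrightarrow> i \<in> C j \<Longrightarrow> Ix i j \<in> {1..c j}"
proof -
  assume j: "j \<in> {1..N}" and i: "i \<in> C j"
  have "bij_betw (\<lambda>i. Ix i j) (C j) {1..c j}" using Ix_bij j by (rule bspec)
  then show ?thesis using i by (rule bij_betw_apply)
qed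

lemma Ix_inj: "j \<in> {1..N} \<Longrightarrow> i \<in> C j \<Longrightarrow> i' \<in> C j \<Longrightarrow> Ix i j = Ix i' j \<Longrightarrow> i = i'"
proof -
  assume j: "j \<in> {1..N}" and i: "i \<in> C j" "i' \<in> C j" "Ix i j = Ix i' j"
  have "bij_betw (\<lambda>i. Ix i j) (C j) {1..c j}" using Ix_bij j by (rule bspec)
  then have "inj_on (\<lambda>i. Ix i j) (C j)" by (rule bij_betw_imp_inj_on)
  then show ?thesis using i by (auto dest: inj_onD)
qed

lemma cyc: assumes j: "j \<in> {1..N}"
  shows "cyc_user N R Ix j k \<in> C j \<and> Ix (cyc_user N R Ix j k) j = (k-1) mod c j + 1"
proof -
  have b: "bij_betw (\<lambda>i. Ix i j) (C j) {1..c j}" using Ix_bij j by auto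
  have cpos: "c j > 0" using c_ge[OF j] by simp
  have v: "(k-1) mod c j + 1 \<in> (\<lambda>i. Ix i j) ` C j"
    using b cpos unfolding bij_betw_def by (simp add: Suc_leI)
  have inj: "inj_on (\<lambda>i. Ix i j) (C j)" using b bij_betw_imp_inj_on by blast
  show ?thesis unfolding cyc_user_def
    using the_inv_into_into[OF inj v, of "C j"] f_the_inv_into_f[OF inj v] by simp
qed

lemma p1: assumes "j \<in> {1..N}" "i \<in> C j"
  shows "p1 i j \<in> C j \<and> Ix (p1 i j) j = Ix i j mod c j + 1"
  using cyc[OF assms(1), of "Ix i j + 1"] unfolding plus1_def by simp

lemma p2: assumes j: "j \<in> {1..N}" and i: "i \<in> C j"
  shows "plus2 N R Ix i j = p1 (p1 i j) j"
proof -
  have a: "plus2 N R Ix i j \<in> C j \<and> Ix (plus2 N R Ix i j) j = (Ix i j + 1) mod c j + 1"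
    using cyc[OF j, of "Ix i j + 2"] unfolding plus2_def by simp
  have b: "p1 (p1 i j) j \<in> C j \<and> Ix (p1 (p1 i j) j) j = (Ix i j mod c j + 1) mod c j + 1"
    using p1[OF j] p1[OF j i] by simp
  have "(Ix i j mod c j + 1) mod c j = (Ix i j + 1) mod c j"
    by (simp add: mod_Suc_eq)
  then show ?thesis using a b Ix_inj[OF j] by metis
qed

lemma p1_neq: assumes j: "j \<in> {1..N}" and i: "i \<in> C j"
  shows "p1 i j \<noteq> i"
proof
  assume h: "p1 i j = i"
  have x: "Ix i j \<in> {1..c j}" using Ix_range[OF j i] .
  have c3: "c j \<ge> 3" using c_ge[OF j] .
  have e: "Ix i j mod c j + 1 = Ix i j" using p1[OF j i] h by simp
  show False
  proof (cases "Ix i j < c j")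
    case True then show ?thesis using e by simp
  next
    case False then have "Ix i j = c j" using x by simp
    then show ?thesis using e c3 by simp
  qed
qed

lemma p2_neq: assumes j: "j \<in> {1..N}" and i: "i \<in> C j"
  shows "plus2 N R Ix i j \<noteq> i"
proof
  assume h: "plus2 N R Ix i j = i"
  have x: "Ix i j \<in> {1..c j}" using Ix_range[OF j i] .
  have c3: "c j \<ge> 3" using c_ge[OF j] .
  have e: "(Ix i j + 1) mod c j + 1 = Ix i j"
    using cyc[OF j, of "Ix i j + 2"] h unfolding plus2_def by simp
  show False
  proof (cases "Ix i j + 1 < c j")
    case True then show ?thesis using e by simp
  next
    case False
    then have "Ix i j + 1 = c j \<or> Ix i j + 1 = c j + 1" using x by auto
    then show ?thesis
    proof
      assume "Ix i j + 1 = c j" then show False using e c3 by simp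
    next
      assume a: "Ix i j + 1 = c j + 1"
      have "(c j + 1) mod c j = 1" using c3 by (simp add: mod_Suc)
      then show False using e a c3 by simp
    qed
  qed
qed

lemma p1_bij: assumes j: "j \<in> {1..N}"
  shows "bij_betw (\<lambda>i. p1 i j) (C j) (C j)"
proof -
  have c3: "c j \<ge> 3" using c_ge[OF j] .
  have inj: "inj_on (\<lambda>i. p1 i j) (C j)"
  proof (rule inj_onI)
    fix x y assume x: "x \<in> C j" and y: "y \<in> C j" and e: "p1 x j = p1 y j"
    have ex: "Ix x j mod c j = Ix y j mod c j" using p1[OF j x] p1[OF j y] e by simp
    have rx: "Ix x j \<in> {1..c j}" "Ix y j \<in> {1..c j}" using Ix_range[OF j] x y by auto
    have "Ix x j = Ix y j"
    proof (cases "Ix x j < c j"; cases "Ix y j < c j")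
      assume "Ix x j < c j" "Ix y j < c j" then show ?thesis using ex by simp
    next
      assume "Ix x j < c j" "\<not> Ix y j < c j" then show ?thesis using ex rx by auto
    next
      assume "\<not> Ix x j < c j" "Ix y j < c j" then show ?thesis using ex rx by auto
    next
      assume "\<not> Ix x j < c j" "\<not> Ix y j < c j" then show ?thesis using rx by auto
    qed
    then show "x = y" using Ix_inj[OF j x y] by simp
  qed
  have "(\<lambda>i. p1 i j) ` C j = C j"
    by (rule endo_inj_surj[OF fin_C _ inj]) (use p1[OF j] in auto)
  then show ?thesis using inj unfolding bij_betw_def by simp
qed

lemma sum_p1: "j \<in> {1..N} \<Longrightarrow> (\<Sum>i\<in>C j. f (p1 i j)) = (\<Sum>i\<in>C j. f i)"
  using sum.reindex_bij_betw[OF p1_bij] by blast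

lemma m_msg: "i \<in> {1..N} \<Longrightarrow> m i \<in> msg_space R i"
  using NE unfolding nash_eq_def by (auto simp: PiE_iff)

lemma snd_nonneg: assumes "i \<in> {1..N}" "j \<in> R i" shows "snd (m i) j \<ge> 0"
proof -
  have "snd (m i) \<in> R i \<rightarrow>\<^sub>E {0..}" using m_msg[OF assms(1)] unfolding msg_space_def by auto
  then show ?thesis using assms(2) by (auto simp: PiE_iff)
qed

lemma P_nonneg: assumes "i \<in> {1..N}" "j \<in> R i" shows "P m i j \<ge> 0"
  unfolding P_def using snd_nonneg[OF assms] by simp

lemma tax_decomp: assumes i: "i \<in> {1..N}"
  shows "t_hat N R Ix m' i = (\<Sum>j\<in>R i. l_price N R Ix m' i j * a_hat N R m' j + P m' i j - P m' (p1 i j) j)"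
  unfolding t_hat_def
proof (rule sum.cong[OF refl])
  fix j assume j: "j \<in> R i"
  have jN: "j \<in> {1..N}" using Rj[OF i j] .
  have iC: "i \<in> C j" using C_mem i j by simp
  show "l_price N R Ix m' i j * a_hat N R m' j + snd (m' i) j * (fst (m' i) j - fst (m' (p1 i j)) j)\<^sup>2 -
        snd (m' (p1 i j)) j * (fst (m' (p1 i j)) j - fst (m' (plus2 N R Ix i j)) j)\<^sup>2 =
        l_price N R Ix m' i j * a_hat N R m' j + P m' i j - P m' (p1 i j) j"
    unfolding P_def p2[OF jN iC] by simp
qed

lemma swap: "(\<Sum>i\<in>{1..N}. \<Sum>j\<in>R i. g i j) = (\<Sum>j\<in>{1..N}. \<Sum>i\<in>C j. (g i j :: real))"
proof -
  have "(\<Sum>i\<in>{1..N}. \<Sum>j\<in>R i. g i j) = (\<Sum>i\<in>{1..N}. \<Sum>j\<in>{j. j \<in> {1..N} \<and> j \<in> R i}. g i j)"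
  proof (rule sum.cong[OF refl])
    fix i assume i: "i \<in> {1..N}"
    have "R i = {j. j \<in> {1..N} \<and> j \<in> R i}" using Rj[OF i] by blast
    then show "(\<Sum>j\<in>R i. g i j) = (\<Sum>j\<in>{j. j \<in> {1..N} \<and> j \<in> R i}. g i j)" by simp
  qed
  also have "\<dots> = (\<Sum>j\<in>{1..N}. \<Sum>i\<in>{i. i \<in> {1..N} \<and> j \<in> R i}. g i j)"
    by (rule sum.swap_restrict) auto
  also have "\<dots> = (\<Sum>j\<in>{1..N}. \<Sum>i\<in>C j. g i j)"
    unfolding affected_def by (simp add: Collect_conj_eq)
  finally show ?thesis .
qed

lemma l_sum: assumes j: "j \<in> {1..N}" shows "(\<Sum>i\<in>C j. l_price N R Ix m' i j) = 0"
proof -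
  have e: "plus2 N R Ix i j = p1 (p1 i j) j" if "i \<in> C j" for i using p2[OF j that] .
  have "(\<Sum>i\<in>C j. l_price N R Ix m' i j) =
        (\<Sum>i\<in>C j. snd (m' (p1 i j)) j) - (\<Sum>i\<in>C j. snd (m' (p1 (p1 i j) j)) j)"
    unfolding l_price_def sum_subtractf[symmetric] using e by (intro sum.cong) auto
  also have "(\<Sum>i\<in>C j. snd (m' (p1 (p1 i j) j)) j) = (\<Sum>i\<in>C j. snd (m' (p1 i j)) j)"
    using sum_p1[OF j, of "\<lambda>k. snd (m' (p1 k j)) j"] .
  finally show ?thesis by simp
qed

lemma budget: "(\<Sum>i\<in>{1..N}. t_hat N R Ix m' i) = 0"
proof -
  have "(\<Sum>i\<in>{1..N}. t_hat N R Ix m' i) =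
        (\<Sum>i\<in>{1..N}. \<Sum>j\<in>R i. l_price N R Ix m' i j * a_hat N R m' j + P m' i j - P m' (p1 i j) j)"
    using tax_decomp by (intro sum.cong) auto
  also have "\<dots> = (\<Sum>j\<in>{1..N}. \<Sum>i\<in>C j. l_price N R Ix m' i j * a_hat N R m' j + P m' i j - P m' (p1 i j) j)"
    by (rule swap)
  also have "\<dots> = (\<Sum>j\<in>{1..N}. 0)"
  proof (rule sum.cong[OF refl])
    fix j assume j: "j \<in> {1..N}"
    have "(\<Sum>i\<in>C j. l_price N R Ix m' i j * a_hat N R m' j + P m' i j - P m' (p1 i j) j)
       = (\<Sum>i\<in>C j. l_price N R Ix m' i j) * a_hat N R m' j + (\<Sum>i\<in>C j. P m' i j) - (\<Sum>i\<in>C j. P m' (p1 i j) j)"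
      by (simp add: sum.distrib sum_subtractf sum_distrib_right)
    also have "\<dots> = 0" using l_sum[OF j] sum_p1[OF j, of "\<lambda>k. P m' k j"] by simp
    finally show "(\<Sum>i\<in>C j. l_price N R Ix m' i j * a_hat N R m' j + P m' i j - P m' (p1 i j) j) = 0" .
  qed
  finally show ?thesis by simp
qed

lemma lx_sum: "(\<Sum>i\<in>{1..N}. \<Sum>j\<in>R i. l_price N R Ix m' i j * y j) = 0"
proof -
  have "(\<Sum>i\<in>{1..N}. \<Sum>j\<in>R i. l_price N R Ix m' i j * y j) = (\<Sum>j\<in>{1..N}. \<Sum>i\<in>C j. l_price N R Ix m' i j * y j)"
    by (rule swap)
  also have "\<dots> = (\<Sum>j\<in>{1..N}. (\<Sum>i\<in>C j. l_price N R Ix m' i j) * y j)"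
    by (simp add: sum_distrib_right)
  also have "\<dots> = 0" using l_sum by simp
  finally show ?thesis .
qed

definition dev :: "nat \<Rightarrow> (nat \<Rightarrow> real) \<Rightarrow> msg" where
  "dev i x = (restrict (\<lambda>j. fst (m i) j + real (c j) * (x j - a_hat N R m j)) (R i), restrict (\<lambda>_. 0) (R i))"

lemma dev_msg: "dev i x \<in> msg_space R i"
  unfolding dev_def msg_space_def by auto

lemma dev_a: assumes i: "i \<in> {1..N}" and j: "j \<in> R i"
  shows "a_hat N R (m(i := dev i x)) j = x j"
proof -
  have jN: "j \<in> {1..N}" using Rj[OF i j] .
  have iC: "i \<in> C j" using C_mem i j by simp
  have cpos: "real (c j) > 0" using c_ge[OF jN] by simp
  define S where "S = (\<Sum>k\<in>C j - {i}. fst (m k) j)"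
  have s1: "(\<Sum>k\<in>C j. fst (m k) j) = fst (m i) j + S"
    unfolding S_def using sum.remove[OF fin_C iC] .
  have s2: "(\<Sum>k\<in>C j. fst ((m(i := dev i x)) k) j) = fst (dev i x) j + S"
  proof -
    have "(\<Sum>k\<in>C j. fst ((m(i := dev i x)) k) j) = fst ((m(i := dev i x)) i) j + (\<Sum>k\<in>C j - {i}. fst ((m(i := dev i x)) k) j)"
      using sum.remove[OF fin_C iC] .
    also have "(\<Sum>k\<in>C j - {i}. fst ((m(i := dev i x)) k) j) = S"
      unfolding S_def by (rule sum.cong) auto
    finally show ?thesis by simp
  qed
  define a0 where "a0 = fst (m i) j"
  have ah: "a_hat N R m j = (a0 + S) / real (c j)"
    unfolding a_hat_def s1 a0_def by simp
  have d: "fst (dev i x) j = a0 + real (c j) * (x j - a_hat N R m j)"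
    unfolding dev_def a0_def using j by simp
  have cc: "real (c j) * ((a0 + S) / real (c j)) = a0 + S" using cpos by simp
  have "a_hat N R (m(i := dev i x)) j = (1 / real (c j)) * (fst (dev i x) j + S)"
    using s2 by (simp add: a_hat_def)
  also have "\<dots> = (1 / real (c j)) * (real (c j) * x j)"
    unfolding d ah using cc by (simp add: right_diff_distrib)
  also have "\<dots> = x j" using cpos by simp
  finally show ?thesis .
qed

lemma dev_t: assumes i: "i \<in> {1..N}"
  shows "t_hat N R Ix (m(i := dev i x)) i = (\<Sum>j\<in>R i. l_price N R Ix m i j * x j - P m (p1 i j) j)"
  unfolding tax_decomp[OF i]
proof (rule sum.cong[OF refl])
  fix j assume j: "j \<in> R i"
  have jN: "j \<in> {1..N}" using Rj[OF i j] .
  have iC: "i \<in> C j" using C_mem i j by simp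
  have n1: "p1 i j \<noteq> i" using p1_neq[OF jN iC] .
  have n2: "p1 (p1 i j) j \<noteq> i" using p2_neq[OF jN iC] p2[OF jN iC] by simp
  have l: "l_price N R Ix (m(i := dev i x)) i j = l_price N R Ix m i j"
    unfolding l_price_def p2[OF jN iC] using n1 n2 by simp
  have P0: "P (m(i := dev i x)) i j = 0" unfolding P_def using j by (simp add: dev_def)
  have P1: "P (m(i := dev i x)) (p1 i j) j = P m (p1 i j) j" unfolding P_def using n1 n2 by simp
  show "l_price N R Ix (m(i := dev i x)) i j * a_hat N R (m(i := dev i x)) j + P (m(i := dev i x)) i j -
        P (m(i := dev i x)) (p1 i j) j = l_price N R Ix m i j * x j - P m (p1 i j) j"
    using l P0 P1 dev_a[OF i j] by simp
qed

lemma restrict_dev: assumes i: "i \<in> {1..N}"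
  shows "restrict (a_hat N R (m(i := dev i x))) (R i) = restrict x (R i)"
  using dev_a[OF i] by (auto simp: restrict_def)

lemma NE_ineq: assumes i: "i \<in> {1..N}"
  shows "uA R A u i (a_hat N R (m(i := dev i x))) (t_hat N R Ix (m(i := dev i x)) i)
          \<le> uA R A u i (a_hat N R m) (t_hat N R Ix m i)"
proof -
  have h: "\<forall>i\<in>{1..N}. \<forall>mi\<in>msg_space R i.
        uA R A u i (a_hat N R (m(i := mi))) (t_hat N R Ix (m(i := mi)) i)
          \<le> uA R A u i (a_hat N R m) (t_hat N R Ix m i)"
    using NE unfolding nash_eq_def by (rule conjunct2)
  show ?thesis using bspec[OF bspec[OF h i] dev_msg] .
qed

lemma key: assumes i: "i \<in> {1..N}" and x: "x i \<in> A i"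
  shows "a_hat N R m i \<in> A i"
    and "ereal (- (\<Sum>j\<in>R i. l_price N R Ix m i j * x j - P m (p1 i j) j) + u i (restrict x (R i)))
          \<le> ereal (- t_hat N R Ix m i + u i (restrict (a_hat N R m) (R i)))"
proof -
  have ii: "i \<in> R i" using R_self i by blast
  have L: "uA R A u i (a_hat N R (m(i := dev i x))) (t_hat N R Ix (m(i := dev i x)) i)
     = ereal (- (\<Sum>j\<in>R i. l_price N R Ix m i j * x j - P m (p1 i j) j) + u i (restrict x (R i)))"
    unfolding uA_def dev_t[OF i] restrict_dev[OF i] dev_a[OF i ii] using x by simp
  have le: "ereal (- (\<Sum>j\<in>R i. l_price N R Ix m i j * x j - P m (p1 i j) j) + u i (restrict x (R i)))
          \<le> uA R A u i (a_hat N R m) (t_hat N R Ix m i)"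
    using NE_ineq[OF i, of x] unfolding L .
  show a: "a_hat N R m i \<in> A i"
  proof (rule ccontr)
    assume "a_hat N R m i \<notin> A i"
    then have "uA R A u i (a_hat N R m) (t_hat N R Ix m i) = -\<infinity>" unfolding uA_def by simp
    then show False using le by simp
  qed
  show "ereal (- (\<Sum>j\<in>R i. l_price N R Ix m i j * x j - P m (p1 i j) j) + u i (restrict x (R i)))
          \<le> ereal (- t_hat N R Ix m i + u i (restrict (a_hat N R m) (R i)))"
    using le a unfolding uA_def by simp
qed

lemma key_real: assumes i: "i \<in> {1..N}" and x: "x i \<in> A i"
  shows "u i (restrict x (R i)) - (\<Sum>j\<in>R i. l_price N R Ix m i j * x j)
        \<le> u i (restrict (a_hat N R m) (R i)) - (\<Sum>j\<in>R i. l_price N R Ix m i j * a_hat N R m j)"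
proof -
  have k: "- (\<Sum>j\<in>R i. l_price N R Ix m i j * x j - P m (p1 i j) j) + u i (restrict x (R i))
          \<le> - t_hat N R Ix m i + u i (restrict (a_hat N R m) (R i))"
    using key(2)[of i x, OF i x] by simp
  have t: "t_hat N R Ix m i = (\<Sum>j\<in>R i. l_price N R Ix m i j * a_hat N R m j) + (\<Sum>j\<in>R i. P m i j) - (\<Sum>j\<in>R i. P m (p1 i j) j)"
    unfolding tax_decomp[OF i] by (simp add: sum.distrib sum_subtractf)
  have s: "(\<Sum>j\<in>R i. l_price N R Ix m i j * x j - P m (p1 i j) j) = (\<Sum>j\<in>R i. l_price N R Ix m i j * x j) - (\<Sum>j\<in>R i. P m (p1 i j) j)"
    by (simp add: sum_subtractf)
  have p: "(\<Sum>j\<in>R i. P m i j) \<ge> 0" using P_nonneg[OF i] by (simp add: sum_nonneg)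
  show ?thesis using k t s p by linarith
qed

lemma partA: assumes i: "i \<in> {1..N}"
  shows "uA R A u i (a_hat N R m) (t_hat N R Ix m i) \<ge> uA R A u i (\<lambda>_. 0) 0"
proof -
  have z: "(\<lambda>_. 0::real) i \<in> A i" using A_zero i by simp
  have pn: "(\<Sum>j\<in>R i. P m (p1 i j) j) \<ge> 0"
  proof (rule sum_nonneg)
    fix j assume j: "j \<in> R i"
    have jN: "j \<in> {1..N}" using Rj[OF i j] .
    have iC: "i \<in> C j" using C_mem i j by simp
    have "p1 i j \<in> C j" using p1[OF jN iC] by simp
    then show "P m (p1 i j) j \<ge> 0" using P_nonneg C_mem by simp
  qed
  have a: "a_hat N R m i \<in> A i" using key(1)[of i "\<lambda>_. 0", OF i z] .
  have "ereal (- (\<Sum>j\<in>R i. l_price N R Ix m i j * 0 - P m (p1 i j) j) + u i (restrict (\<lambda>_. 0) (R i)))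
          \<le> ereal (- t_hat N R Ix m i + u i (restrict (a_hat N R m) (R i)))"
    using key(2)[of i "\<lambda>_. 0", OF i z] .
  then have "u i (restrict (\<lambda>_. 0) (R i)) \<le> - t_hat N R Ix m i + u i (restrict (a_hat N R m) (R i))"
    using pn by (simp add: sum_negf)
  then show ?thesis unfolding uA_def using a z by simp
qed

lemma uA_fin: "uA R A u i a t \<noteq> \<infinity>"
  unfolding uA_def by simp

lemma partB: "optimal_PC N R A u (a_hat N R m) (t_hat N R Ix m)"
proof -
  have aA: "\<forall>i\<in>{1..N}. a_hat N R m i \<in> A i"
  proof
    fix i assume i: "i \<in> {1..N}"
    have z: "(\<lambda>_. 0::real) i \<in> A i" using A_zero i by simp
    show "a_hat N R m i \<in> A i" using key(1)[of i "\<lambda>_. 0", OF i z] .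
  qed
  have RHS: "(\<Sum>i\<in>{1..N}. uA R A u i (a_hat N R m) (t_hat N R Ix m i))
        = ereal (\<Sum>i\<in>{1..N}. u i (restrict (a_hat N R m) (R i)))"
  proof -
    have "(\<Sum>i\<in>{1..N}. uA R A u i (a_hat N R m) (t_hat N R Ix m i))
        = (\<Sum>i\<in>{1..N}. ereal (- t_hat N R Ix m i + u i (restrict (a_hat N R m) (R i))))"
      using aA unfolding uA_def by (intro sum.cong) auto
    also have "\<dots> = ereal (\<Sum>i\<in>{1..N}. - t_hat N R Ix m i + u i (restrict (a_hat N R m) (R i)))"
      by (rule sum_ereal)
    also have "(\<Sum>i\<in>{1..N}. - t_hat N R Ix m i + u i (restrict (a_hat N R m) (R i)))
        = (\<Sum>i\<in>{1..N}. u i (restrict (a_hat N R m) (R i)))"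
      using budget[of m] by (simp add: sum_subtractf)
    finally show ?thesis .
  qed
  have opt: "(\<Sum>i\<in>{1..N}. uA R A u i a' (t' i)) \<le> (\<Sum>i\<in>{1..N}. uA R A u i (a_hat N R m) (t_hat N R Ix m i))"
    if t': "(\<Sum>i\<in>{1..N}. t' i) = 0" for a' t'
  proof (cases "\<forall>i\<in>{1..N}. a' i \<in> A i")
    case True
    have LHS: "(\<Sum>i\<in>{1..N}. uA R A u i a' (t' i)) = ereal (\<Sum>i\<in>{1..N}. u i (restrict a' (R i)))"
    proof -
      have "(\<Sum>i\<in>{1..N}. uA R A u i a' (t' i)) = (\<Sum>i\<in>{1..N}. ereal (- t' i + u i (restrict a' (R i))))"
        using True unfolding uA_def by (intro sum.cong) auto
      also have "\<dots> = ereal (\<Sum>i\<in>{1..N}. - t' i + u i (restrict a' (R i)))"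
        by (rule sum_ereal)
      also have "(\<Sum>i\<in>{1..N}. - t' i + u i (restrict a' (R i))) = (\<Sum>i\<in>{1..N}. u i (restrict a' (R i)))"
        using t' by (simp add: sum_subtractf)
      finally show ?thesis .
    qed
    have "(\<Sum>i\<in>{1..N}. u i (restrict a' (R i)))
       \<le> (\<Sum>i\<in>{1..N}. (u i (restrict (a_hat N R m) (R i)) - (\<Sum>j\<in>R i. l_price N R Ix m i j * a_hat N R m j))
                          + (\<Sum>j\<in>R i. l_price N R Ix m i j * a' j))"
    proof (rule sum_mono)
      fix i assume i: "i \<in> {1..N}"
      show "u i (restrict a' (R i)) \<le> (u i (restrict (a_hat N R m) (R i)) - (\<Sum>j\<in>R i. l_price N R Ix m i j * a_hat N R m j))
                          + (\<Sum>j\<in>R i. l_price N R Ix m i j * a' j)"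
        using key_real[of i a', OF i] True i by simp
    qed
    also have "\<dots> = (\<Sum>i\<in>{1..N}. u i (restrict (a_hat N R m) (R i)))
          - (\<Sum>i\<in>{1..N}. \<Sum>j\<in>R i. l_price N R Ix m i j * a_hat N R m j)
          + (\<Sum>i\<in>{1..N}. \<Sum>j\<in>R i. l_price N R Ix m i j * a' j)"
      by (simp add: sum.distrib sum_subtractf)
    also have "\<dots> = (\<Sum>i\<in>{1..N}. u i (restrict (a_hat N R m) (R i)))"
      using lx_sum[of m "a_hat N R m"] lx_sum[of m a'] by simp
    finally show ?thesis unfolding LHS RHS by simp
  next
    case False
    then obtain i0 where i0: "i0 \<in> {1..N}" "a' i0 \<notin> A i0" by blast
    have "(\<Sum>i\<in>{1..N}. uA R A u i a' (t' i)) = uA R A u i0 a' (t' i0) + (\<Sum>i\<in>{1..N} - {i0}. uA R A u i a' (t' i))"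
      using sum.remove[of "{1..N}" i0] i0(1) by simp
    also have "uA R A u i0 a' (t' i0) = -\<infinity>" unfolding uA_def using i0(2) by simp
    also have "(\<Sum>i\<in>{1..N} - {i0}. uA R A u i a' (t' i)) \<noteq> \<infinity>"
      unfolding sum_Pinfty using uA_fin by simp
    then have "-\<infinity> + (\<Sum>i\<in>{1..N} - {i0}. uA R A u i a' (t' i)) = -\<infinity>" by simp
    finally show ?thesis by simp
  qed
  show ?thesis unfolding optimal_PC_def using aA budget[of m] opt by blast
qed

end

theorem theorem1:
  fixes N :: nat
    and R :: "nat \<Rightarrow> nat set"
    and A :: "nat \<Rightarrow> real set"
    and u :: "nat \<Rightarrow> (nat \<Rightarrow> real) \<Rightarrow> real"
    and Ix :: "nat \<Rightarrow> nat \<Rightarrow> nat"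
    and m :: "nat \<Rightarrow> msg"
  assumes N_pos: "N \<ge> 1"
    and R_sub: "\<forall>i\<in>{1..N}. R i \<subseteq> {1..N}"
    and R_self: "\<forall>i\<in>{1..N}. i \<in> R i"
    and C_card: "\<forall>j\<in>{1..N}. card (affected N R j) \<ge> 3"
    and A_convex: "\<forall>i\<in>{1..N}. convex (A i)"
    and A_compact: "\<forall>i\<in>{1..N}. compact (A i)"
    and A_zero: "\<forall>i\<in>{1..N}. (0::real) \<in> A i"
    and u_concave: "\<forall>i\<in>{1..N}. concave_util R A u i"
    and Ix_bij: "\<forall>j\<in>{1..N}. bij_betw (\<lambda>i. Ix i j) (affected N R j) {1..card (affected N R j)}"
    and NE: "nash_eq N R Ix A u m"
  shows "(\<forall>i\<in>{1..N}. uA R A u i (a_hat N R m) (t_hat N R Ix m i) \<ge> uA R A u i (\<lambda>_. 0) 0)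
         \<and> optimal_PC N R A u (a_hat N R m) (t_hat N R Ix m)"
proof -
  interpret setting N R A u Ix m
    using R_sub R_self C_card A_zero Ix_bij NE by unfold_locales
  show ?thesis using partA partB by blast
qed

end
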